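(* Let $(R,\mathfrak m)$ be a zero-dimensional Gorenstein local ring and let $I\subseteq\mathfrak m$ be an ideal with $I^r\ne0$ and $I^{r+1}=0$. If the associated graded ring $G(I)=\bigoplus_{i\ge0}I^i/I^{i+1}$ is Gorenstein, then $I^i/I^{i+1}$ is a faithful $(R/I)$-module for $0\le i\le r$. *)

theory Defs
  imports "HOL-Algebra.Algebra"
begin

(* n-th power of an ideal, using the library's ideal product (I^0 = R) *)
definition ideal_pow :: "('a, 'b) ring_scheme \<Rightarrow> 'a set \<Rightarrow> nat \<Rightarrow> 'a set" where
  "ideal_pow R I n = I [^]\<^bsub>ideals_set R\<^esub> n"

definition socle :: "('a, 'b) ring_scheme \<Rightarrow> 'a set \<Rightarrow> 'a set" where
  "socle R m = {x \<in> carrier R. \<forall>y \<in> m. x \<otimes>\<^bsub>R\<^esub> y = \<zero>\<^bsub>R\<^esub>}"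

(* zero-dimensional (Noetherian, every prime maximal) local Gorenstein ring:
   the socle is one-dimensional over the residue field, i.e. a simple R-module *)
definition zero_dim_gorenstein_local :: "('a, 'b) ring_scheme \<Rightarrow> bool" where
  "zero_dim_gorenstein_local S \<longleftrightarrow>
     cring S \<and> noetherian_ring S \<and> (\<exists>!m. maximalideal m S) \<and>
     (\<forall>P. primeideal P S \<longrightarrow> maximalideal P S) \<and>
     (\<forall>m. maximalideal m S \<longrightarrow>
        socle S m \<noteq> {\<zero>\<^bsub>S\<^esub>} \<and>
        (\<forall>J. ideal J S \<and> J \<subseteq> socle S m \<longrightarrow> J = {\<zero>\<^bsub>S\<^esub>} \<or> J = socle S m))"

definition rep :: "'a set \<Rightarrow> 'a" where
  "rep A = (SOME a. a \<in> A)"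

(* associated graded ring G(I) = \<Oplus>_{i\<ge>0} I^i/I^{i+1}: elements are finitely supported
   sequences of cosets, the n-th entry lying in I^n/I^{n+1} *)
definition assoc_graded :: "('a, 'b) ring_scheme \<Rightarrow> 'a set \<Rightarrow> (nat \<Rightarrow> 'a set) ring" where
  "assoc_graded R I =
    \<lparr> carrier = {f. (\<forall>n. \<exists>a \<in> ideal_pow R I n. f n = a_r_coset R (ideal_pow R I (Suc n)) a)
                    \<and> finite {n. f n \<noteq> ideal_pow R I (Suc n)}},
      monoid.mult = (\<lambda>f g n. a_r_coset R (ideal_pow R I (Suc n))
                 (finsum R (\<lambda>i. rep (f i) \<otimes>\<^bsub>R\<^esub> rep (g (n - i))) {..n})),
      one = (\<lambda>n. if n = 0 then a_r_coset R (ideal_pow R I 1) \<one>\<^bsub>R\<^esub> else ideal_pow R I (Suc n)),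
      ring.zero = (\<lambda>n. ideal_pow R I (Suc n)),
      ring.add = (\<lambda>f g n. a_r_coset R (ideal_pow R I (Suc n)) (rep (f n) \<oplus>\<^bsub>R\<^esub> rep (g n))) \<rparr>"

definition ann_quot :: "('a, 'b) ring_scheme \<Rightarrow> 'a set \<Rightarrow> 'a set \<Rightarrow> 'a set" where
  "ann_quot R M N = {a \<in> carrier R. \<forall>x \<in> M. a \<otimes>\<^bsub>R\<^esub> x \<in> N}"

(* M/N (with I*M \<subseteq> N) is a faithful R/I-module: its R-annihilator is exactly I *)
definition faithful_over_quot :: "('a, 'b) ring_scheme \<Rightarrow> 'a set \<Rightarrow> 'a set \<Rightarrow> 'a set \<Rightarrow> bool" where
  "faithful_over_quot R I M N \<longleftrightarrow> ann_quot R M N = I"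

end

theory Submission
  imports Defs
begin


lemma (in ring) ip0: "ideal_pow R I 0 = carrier R"
  by (simp add: ideal_pow_def ideals_set_def)

lemma (in ring) ipSuc: "ideal_pow R I (Suc n) = ideal_prod R (ideal_pow R I n) I"
  by (simp add: ideal_pow_def ideals_set_def)

lemma (in ring) ip_ideal: "ideal I R \<Longrightarrow> ideal (ideal_pow R I n) R"
  by (induct n) (simp_all add: ip0 ipSuc ideal_prod_is_ideal oneideal)

lemma (in ring) ip_carr: "ideal I R \<Longrightarrow> x \<in> ideal_pow R I n \<Longrightarrow> x \<in> carrier R"
  by (rule ideal.Icarr[OF ip_ideal])

lemma (in ring) ip_dec: assumes "ideal I R" shows "ideal_pow R I (Suc n) \<subseteq> ideal_pow R I n"
  unfolding ipSuc using ideal_prod_inter[OF ip_ideal[OF assms] assms] by blast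

lemma (in ring) ip_mono: "k \<le> n \<Longrightarrow> ideal I R \<Longrightarrow> ideal_pow R I n \<subseteq> ideal_pow R I k"
proof (induct n rule: dec_induct)
  case (step n) then show ?case using ip_dec[of I n] by (rule_tac subset_trans) auto
qed simp

lemma (in cring) ip_mult:
  assumes I: "ideal I R"
  shows "a \<in> ideal_pow R I k \<Longrightarrow> b \<in> ideal_pow R I l \<Longrightarrow> a \<otimes> b \<in> ideal_pow R I (k + l)"
proof (induct l arbitrary: b)
  case 0
  then show ?case using ideal.I_r_closed[OF ip_ideal[OF I]] by (simp add: ip0)
next
  case (Suc l)
  have a: "a \<in> carrier R" by (rule ip_carr[OF I Suc.prems(1)])
  from Suc.prems(2) have "b \<in> ideal_prod R (ideal_pow R I l) I" by (simp add: ipSuc)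
  then have "a \<otimes> b \<in> ideal_prod R (ideal_pow R I (k + l)) I"
  proof (induct b rule: ideal_prod.induct)
    case (prod i j)
    have i: "i \<in> carrier R" by (rule ip_carr[OF I prod(1)])
    have j: "j \<in> carrier R" by (rule ideal.Icarr[OF I prod(2)])
    have eq: "a \<otimes> (i \<otimes> j) = (a \<otimes> i) \<otimes> j" using a i j m_assoc by simp
    show ?case unfolding eq
      by (rule ideal_prod.prod[OF Suc.hyps[OF Suc.prems(1) prod(1)] prod(2)])
  next
    case (sum s1 s2)
    have "s1 \<in> carrier R" "s2 \<in> carrier R"
      using sum(1,3) ideal_prod_in_carrier[OF ip_ideal[OF I] I] by auto
    then have eq: "a \<otimes> (s1 \<oplus> s2) = a \<otimes> s1 \<oplus> a \<otimes> s2" using a r_distr by simp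
    show ?case unfolding eq by (rule ideal_prod.sum[OF sum(2) sum(4)])
  qed
  then show ?case unfolding add_Suc_right ipSuc .
qed



lemma (in ring) chain_union_ideal:
  assumes ne: "C \<noteq> {}" and id: "\<And>J. J \<in> C \<Longrightarrow> ideal J R"
    and ch: "\<And>A B. A \<in> C \<Longrightarrow> B \<in> C \<Longrightarrow> A \<subseteq> B \<or> B \<subseteq> A"
  shows "ideal (\<Union>C) R"
proof (rule idealI)
  show "ring R" by (rule ring_axioms)
  show "subgroup (\<Union>C) (add_monoid R)"
  proof (rule add.subgroupI)
    show "\<Union>C \<subseteq> carrier R"
    proof
      fix x assume "x \<in> \<Union>C"
      then obtain J where J: "J \<in> C" "x \<in> J" by blast
      show "x \<in> carrier R" by (rule ideal.Icarr[OF id[OF J(1)] J(2)])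
    qed
    obtain J where J: "J \<in> C" using ne by blast
    have "\<zero> \<in> J" by (rule additive_subgroup.zero_closed[OF ideal.axioms(1)[OF id[OF J]]])
    then show "\<Union>C \<noteq> {}" using J by blast
    show "\<ominus> a \<in> \<Union>C" if "a \<in> \<Union>C" for a
    proof -
      from that obtain J where J: "J \<in> C" "a \<in> J" by blast
      have "\<ominus> a \<in> J" by (rule additive_subgroup.a_inv_closed[OF ideal.axioms(1)[OF id[OF J(1)]] J(2)])
      then show ?thesis using J by blast
    qed
    show "a \<oplus> b \<in> \<Union>C" if "a \<in> \<Union>C" "b \<in> \<Union>C" for a b
    proof -
      from that obtain A B where AB: "A \<in> C" "a \<in> A" "B \<in> C" "b \<in> B" by blast
      show ?thesis
      proof (cases "A \<subseteq> B")
        case True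
        have "a \<oplus> b \<in> B"
          by (rule additive_subgroup.a_closed[OF ideal.axioms(1)[OF id[OF AB(3)]] subsetD[OF True AB(2)] AB(4)])
        then show ?thesis using AB by blast
      next
        case False
        then have F: "B \<subseteq> A" using ch[OF AB(1) AB(3)] by blast
        have "a \<oplus> b \<in> A"
          by (rule additive_subgroup.a_closed[OF ideal.axioms(1)[OF id[OF AB(1)]] AB(2) subsetD[OF F AB(4)]])
        then show ?thesis using AB by blast
      qed
    qed
  qed
  show "x \<otimes> a \<in> \<Union>C" if "a \<in> \<Union>C" "x \<in> carrier R" for a x
  proof -
    from that obtain J where J: "J \<in> C" "a \<in> J" by blast
    have "x \<otimes> a \<in> J" by (rule ideal.I_l_closed[OF id[OF J(1)] J(2) that(2)])
    then show ?thesis using J by blast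
  qed
  show "a \<otimes> x \<in> \<Union>C" if "a \<in> \<Union>C" "x \<in> carrier R" for a x
  proof -
    from that obtain J where J: "J \<in> C" "a \<in> J" by blast
    have "a \<otimes> x \<in> J" by (rule ideal.I_r_closed[OF id[OF J(1)] J(2) that(2)])
    then show ?thesis using J by blast
  qed
qed


lemma (in ring) ideal_zero_in: "ideal J R \<Longrightarrow> \<zero> \<in> J"
  by (rule additive_subgroup.zero_closed[OF ideal.axioms(1)])

lemma (in cring) nilpotent_of_unique_prime:
  assumes pm: "\<And>P. primeideal P R \<Longrightarrow> P = M" and xM: "x \<in> M"
    and xc: "x \<in> carrier R"
  shows "\<exists>n::nat. x [^] n = \<zero>"
proof (rule ccontr)
  assume nz: "\<not> (\<exists>n::nat. x [^] n = \<zero>)"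
  define F where "F = {J. ideal J R \<and> (\<forall>n::nat. x [^] n \<notin> J)}"
  have "{\<zero>} \<in> F" using nz zeroideal unfolding F_def by auto
  then have Fne: "F \<noteq> {}" by blast
  have "\<exists>J\<in>F. \<forall>Y\<in>F. J \<subseteq> Y \<longrightarrow> Y = J"
  proof (rule subset_Zorn_nonempty[OF Fne])
    fix C assume Cne: "C \<noteq> {}" and ch: "subset.chain F C"
    have CF: "C \<subseteq> F" using ch unfolding subset.chain_def by blast
    have "ideal (\<Union>C) R"
    proof (rule chain_union_ideal[OF Cne])
      show "ideal J R" if "J \<in> C" for J using CF that unfolding F_def by blast
      show "A \<subseteq> B \<or> B \<subseteq> A" if "A \<in> C" "B \<in> C" for A B
        using ch that unfolding subset.chain_def by blast
    qed
    moreover have "\<forall>n::nat. x [^] n \<notin> \<Union>C" using CF unfolding F_def by blast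
    ultimately show "\<Union>C \<in> F" unfolding F_def by blast
  qed
  then obtain J where JF: "J \<in> F" and Jmax: "\<And>Y. Y \<in> F \<Longrightarrow> J \<subseteq> Y \<Longrightarrow> Y = J" by blast
  have Jid: "ideal J R" and Jd: "\<And>n::nat. x [^] n \<notin> J" using JF unfolding F_def by auto
  have Jc: "J \<subseteq> carrier R" using ideal.Icarr[OF Jid] by blast
  have ext: "\<exists>p::nat. \<exists>j\<in>J. \<exists>u\<in>carrier R. x [^] p = j \<oplus> u \<otimes> a"
    if a: "a \<in> carrier R" "a \<notin> J" for a
  proof -
    let ?K = "J <+>\<^bsub>R\<^esub> PIdl a"
    have Kid: "ideal ?K R" by (rule add_ideals[OF Jid cgenideal_ideal[OF a(1)]])
    have z: "\<zero> \<in> PIdl a" unfolding cgenideal_def using a(1) by (auto intro!: exI[of _ \<zero>])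
    have JK: "J \<subseteq> ?K"
    proof
      fix j assume j: "j \<in> J"
      then have "j = j \<oplus> \<zero>" using Jc by auto
      then show "j \<in> ?K" using j z unfolding set_add_def' by blast
    qed
    have "a \<in> ?K"
    proof -
      have "a = \<zero> \<oplus> \<one> \<otimes> a" using a by simp
      moreover have "\<one> \<otimes> a \<in> PIdl a" unfolding cgenideal_def by blast
      ultimately show ?thesis using ideal_zero_in[OF Jid] unfolding set_add_def' by blast
    qed
    then have "?K \<noteq> J" using a(2) by blast
    then have "?K \<notin> F" using Jmax JK by blast
    then obtain p :: nat where "x [^] p \<in> ?K" using Kid unfolding F_def by blast
    then obtain j k where jk: "j \<in> J" "k \<in> PIdl a" "x [^] p = j \<oplus> k" unfolding set_add_def' by blast
    then obtain u where "u \<in> carrier R" "k = u \<otimes> a" unfolding cgenideal_def by blast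
    then show ?thesis using jk by blast
  qed
  have "primeideal J R"
  proof (rule primeidealI[OF Jid is_cring])
    show "carrier R \<noteq> J" using Jd[of 0] by auto
    show "a \<in> J \<or> b \<in> J" if ab: "a \<in> carrier R" "b \<in> carrier R" "a \<otimes> b \<in> J" for a b
    proof (rule ccontr)
      assume "\<not> (a \<in> J \<or> b \<in> J)"
      then have na: "a \<notin> J" and nb: "b \<notin> J" by auto
      obtain p :: nat and j1 u where p: "j1 \<in> J" "u \<in> carrier R" "x [^] p = j1 \<oplus> u \<otimes> a"
        using ext[OF ab(1) na] by blast
      obtain q :: nat and j2 v where q: "j2 \<in> J" "v \<in> carrier R" "x [^] q = j2 \<oplus> v \<otimes> b"
        using ext[OF ab(2) nb] by blast
      have j1c: "j1 \<in> carrier R" and j2c: "j2 \<in> carrier R" using p(1) q(1) Jc by auto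
      have "x [^] (p + q) = x [^] p \<otimes> x [^] q" using xc by (simp add: nat_pow_mult)
      also have "\<dots> = j1 \<otimes> (j2 \<oplus> v \<otimes> b) \<oplus> ((u \<otimes> a) \<otimes> j2 \<oplus> (u \<otimes> v) \<otimes> (a \<otimes> b))"
        unfolding p(3) q(3) using j1c j2c p(2) q(2) ab(1,2)
        by (simp add: l_distr r_distr m_ac a_ac)
      finally have eq: "x [^] (p + q) = j1 \<otimes> (j2 \<oplus> v \<otimes> b) \<oplus> ((u \<otimes> a) \<otimes> j2 \<oplus> (u \<otimes> v) \<otimes> (a \<otimes> b))" .
      have t1: "j1 \<otimes> (j2 \<oplus> v \<otimes> b) \<in> J"
        by (rule ideal.I_r_closed[OF Jid p(1)]) (use j2c q(2) ab(2) in simp)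
      have t2: "(u \<otimes> a) \<otimes> j2 \<in> J"
        by (rule ideal.I_l_closed[OF Jid q(1)]) (use p(2) ab(1) in simp)
      have t3: "(u \<otimes> v) \<otimes> (a \<otimes> b) \<in> J"
        by (rule ideal.I_l_closed[OF Jid ab(3)]) (use p(2) q(2) in simp)
      have "x [^] (p + q) \<in> J" unfolding eq
        using additive_subgroup.a_closed[OF ideal.axioms(1)[OF Jid]] t1 t2 t3 by simp
      then show False using Jd by blast
    qed
  qed
  then have "J = M" by (rule pm)
  moreover have "x [^] (1::nat) \<notin> J" by (rule Jd)
  ultimately show False using xM xc by simp
qed


definition annih :: "('a, 'b) ring_scheme \<Rightarrow> 'a \<Rightarrow> 'a set" where
  "annih R z = {g \<in> carrier R. z \<otimes>\<^bsub>R\<^esub> g = \<zero>\<^bsub>R\<^esub>}"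

lemma (in cring) annih_ideal:
  assumes z: "z \<in> carrier R"
  shows "ideal (annih R z) R"
proof (rule idealI)
  show "ring R" by (rule ring_axioms)
  show "subgroup (annih R z) (add_monoid R)"
  proof (rule add.subgroupI)
    show "annih R z \<subseteq> carrier R" unfolding annih_def by blast
    show "annih R z \<noteq> {}" unfolding annih_def using z by (auto intro!: exI[of _ \<zero>])
    show "\<ominus> a \<in> annih R z" if "a \<in> annih R z" for a
      using that z unfolding annih_def by (simp add: r_minus)
    show "a \<oplus> b \<in> annih R z" if "a \<in> annih R z" "b \<in> annih R z" for a b
      using that z unfolding annih_def by (simp add: r_distr)
  qed
  show "x \<otimes> a \<in> annih R z" if "a \<in> annih R z" "x \<in> carrier R" for a x
  proof -
    have "z \<otimes> (x \<otimes> a) = x \<otimes> (z \<otimes> a)" using that z unfolding annih_def by (simp add: m_lcomm)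
    then show ?thesis using that z unfolding annih_def by simp
  qed
  show "a \<otimes> x \<in> annih R z" if "a \<in> annih R z" "x \<in> carrier R" for a x
  proof -
    have "z \<otimes> (a \<otimes> x) = (z \<otimes> a) \<otimes> x" using that z unfolding annih_def by (simp add: m_assoc[symmetric])
    then show ?thesis using that z unfolding annih_def by simp
  qed
qed

lemma (in cring) socle_multiple:
  assumes noeth: "noetherian_ring R"
    and nil: "\<And>g. g \<in> M \<Longrightarrow> \<exists>n::nat. g [^] n = \<zero>"
    and Mc: "M \<subseteq> carrier R"
    and x: "x \<in> carrier R" "x \<noteq> \<zero>"
  shows "\<exists>y\<in>carrier R. x \<otimes> y \<noteq> \<zero> \<and> (\<forall>g\<in>M. (x \<otimes> y) \<otimes> g = \<zero>)"
proof -
  define F where "F = {annih R (x \<otimes> y) | y. y \<in> carrier R \<and> x \<otimes> y \<noteq> \<zero>}"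
  have "annih R (x \<otimes> \<one>) \<in> F" unfolding F_def using x by (auto intro!: exI[of _ \<one>])
  then have Fne: "F \<noteq> {}" by blast
  have "\<exists>J\<in>F. \<forall>Y\<in>F. J \<subseteq> Y \<longrightarrow> Y = J"
  proof (rule subset_Zorn_nonempty[OF Fne])
    fix C assume Cne: "C \<noteq> {}" and ch: "subset.chain F C"
    have CF: "C \<subseteq> F" using ch unfolding subset.chain_def by blast
    have Cid: "ideal J R" if "J \<in> C" for J
    proof -
      from that CF obtain y where "y \<in> carrier R" "J = annih R (x \<otimes> y)" unfolding F_def by blast
      then show ?thesis using annih_ideal x by simp
    qed
    have "ideal (\<Union>C) R"
    proof (rule chain_union_ideal[OF Cne Cid])
      show "A \<subseteq> B \<or> B \<subseteq> A" if "A \<in> C" "B \<in> C" for A B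
        using ch that unfolding subset.chain_def by blast
    qed
    then obtain A where A: "A \<subseteq> carrier R" "finite A" "\<Union>C = Idl A"
      using noetherian_ring.finetely_gen[OF noeth] by blast
    have "A \<subseteq> \<Union>C" using A genideal_self[OF A(1)] by simp
    then obtain B where B: "B \<in> C" "A \<subseteq> B"
      using finite_subset_Union_chain[OF A(2) _ Cne ch] by blast
    have "Idl A \<subseteq> B" by (rule genideal_minimal[OF Cid[OF B(1)] B(2)])
    then have "\<Union>C = B" using A(3) B(1) by blast
    then show "\<Union>C \<in> F" using B(1) CF by blast
  qed
  then obtain J where JF: "J \<in> F" and Jmax: "\<And>Y. Y \<in> F \<Longrightarrow> J \<subseteq> Y \<Longrightarrow> Y = J" by blast
  from JF obtain y where y: "y \<in> carrier R" "x \<otimes> y \<noteq> \<zero>" and J: "J = annih R (x \<otimes> y)"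
    unfolding F_def by blast
  define z where "z = x \<otimes> y"
  have zc: "z \<in> carrier R" unfolding z_def using x y by simp
  have "z \<otimes> g = \<zero>" if g: "g \<in> M" for g
  proof (rule ccontr)
    assume nz: "z \<otimes> g \<noteq> \<zero>"
    have gc: "g \<in> carrier R" using g Mc by blast
    have "annih R (x \<otimes> (y \<otimes> g)) \<in> F" unfolding F_def
      using nz y gc x by (auto simp: z_def m_assoc intro!: exI[of _ "y \<otimes> g"])
    moreover have "J \<subseteq> annih R (x \<otimes> (y \<otimes> g))"
    proof
      fix w assume "w \<in> J"
      then have w: "w \<in> carrier R" "x \<otimes> y \<otimes> w = \<zero>" unfolding J annih_def by auto
      have "x \<otimes> (y \<otimes> g) \<otimes> w = g \<otimes> (x \<otimes> y \<otimes> w)" using x y gc w(1) by (simp add: m_ac)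
      then show "w \<in> annih R (x \<otimes> (y \<otimes> g))" unfolding annih_def using w gc by simp
    qed
    ultimately have "annih R (x \<otimes> (y \<otimes> g)) = J" by (rule Jmax)
    then have eqa: "annih R (z \<otimes> g) = annih R z" unfolding J z_def using x y gc by (simp add: m_assoc)
    have step: "\<And>h. h \<in> carrier R \<Longrightarrow> z \<otimes> (g [^] n \<otimes> h) = \<zero> \<Longrightarrow> z \<otimes> h = \<zero>" for n :: nat
    proof (induct n)
      case 0
      then show ?case by simp
    next
      case (Suc n)
      have "g [^] Suc n \<otimes> h = g [^] n \<otimes> (g \<otimes> h)" using gc Suc.prems(1) by (simp add: m_assoc)
      then have "z \<otimes> (g \<otimes> h) = \<zero>" using Suc gc by simp
      then have "h \<in> annih R (z \<otimes> g)" unfolding annih_def using Suc.prems(1) zc gc by (simp add: m_assoc)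
      then have "h \<in> annih R z" unfolding eqa .
      then show ?case unfolding annih_def by simp
    qed
    obtain N :: nat where "g [^] N = \<zero>" using nil[OF g] by blast
    then have "z \<otimes> \<one> = \<zero>" using step[of \<one> N] zc by simp
    then show False using zc y(2) unfolding z_def by simp
  qed
  then show ?thesis using y unfolding z_def by blast
qed



lemma (in ring) finsum_ideal:
  assumes J: "ideal J R" and A: "finite A"
  shows "(\<And>k. k \<in> A \<Longrightarrow> t k \<in> J) \<Longrightarrow> finsum R t A \<in> J"
  using A
proof (induct A rule: finite_induct)
  case empty
  then show ?case using ideal_zero_in[OF J] by simp
next
  case (insert x A)
  have Pi: "t \<in> A \<rightarrow> carrier R" using insert.prems ideal.Icarr[OF J] by blast
  have tx: "t x \<in> carrier R" using insert.prems ideal.Icarr[OF J] by blast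
  have eq: "finsum R t (insert x A) = t x \<oplus> finsum R t A"
    by (rule finsum_insert[OF insert.hyps(1) insert.hyps(2) Pi tx])
  have "t x \<oplus> finsum R t A \<in> J"
    by (rule additive_subgroup.a_closed[OF ideal.axioms(1)[OF J]]) (use insert in auto)
  then show ?case unfolding eq .
qed

lemma ag_carrier: "f \<in> carrier (assoc_graded R I) \<longleftrightarrow>
   (\<forall>n. \<exists>a \<in> ideal_pow R I n. f n = a_r_coset R (ideal_pow R I (Suc n)) a)
    \<and> finite {n. f n \<noteq> ideal_pow R I (Suc n)}"
  by (simp add: assoc_graded_def)

lemma ag_mult: "f \<otimes>\<^bsub>assoc_graded R I\<^esub> g = (\<lambda>n. a_r_coset R (ideal_pow R I (Suc n))
                 (finsum R (\<lambda>i. rep (f i) \<otimes>\<^bsub>R\<^esub> rep (g (n - i))) {..n}))"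
  by (simp add: assoc_graded_def)

lemma ag_zero: "\<zero>\<^bsub>assoc_graded R I\<^esub> = (\<lambda>n. ideal_pow R I (Suc n))"
  by (simp add: assoc_graded_def)

lemma (in ring) rep_coset:
  assumes "ideal J R" "b \<in> carrier R"
  shows "\<exists>h\<in>J. rep (J +> b) = h \<oplus> b"
proof -
  have "\<zero> \<oplus> b \<in> J +> b" using ideal_zero_in[OF assms(1)] unfolding a_r_coset_def' by blast
  then have "rep (J +> b) \<in> J +> b" unfolding rep_def by (rule someI)
  then show ?thesis unfolding a_r_coset_def' by blast
qed

lemma (in ring) rep_ideal:
  assumes "ideal J R"
  shows "rep J \<in> J"
  unfolding rep_def using ideal_zero_in[OF assms] by (rule someI)

lemma (in ring) rep_mem:
  assumes I: "ideal I R" and f: "f \<in> carrier (assoc_graded R I)"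
  shows "rep (f n) \<in> ideal_pow R I n"
proof -
  obtain b where b: "b \<in> ideal_pow R I n" "f n = ideal_pow R I (Suc n) +> b"
    using f unfolding ag_carrier by blast
  have bc: "b \<in> carrier R" by (rule ip_carr[OF I b(1)])
  obtain h where h: "h \<in> ideal_pow R I (Suc n)" "rep (f n) = h \<oplus> b"
    using rep_coset[OF ip_ideal[OF I] bc] b(2) by auto
  have "h \<in> ideal_pow R I n" using h(1) ip_dec[OF I] by blast
  then have "h \<oplus> b \<in> ideal_pow R I n"
    by (rule additive_subgroup.a_closed[OF ideal.axioms(1)[OF ip_ideal[OF I]] _ b(1)])
  then show ?thesis using h(2) by simp
qed

lemma (in cring) derived:
  assumes I: "ideal I R" and a: "a \<in> carrier R"
    and H: "\<forall>x\<in>ideal_pow R I i. a \<otimes> x \<in> ideal_pow R I (Suc i)"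
  shows "x \<in> ideal_pow R I (i + l) \<Longrightarrow> a \<otimes> x \<in> ideal_pow R I (Suc (i + l))"
proof (induct l arbitrary: x)
  case 0
  then show ?case using H by simp
next
  case (Suc l)
  from Suc.prems have "x \<in> ideal_prod R (ideal_pow R I (i + l)) I" by (simp add: ipSuc)
  then have "a \<otimes> x \<in> ideal_prod R (ideal_pow R I (Suc (i + l))) I"
  proof (induct x rule: ideal_prod.induct)
    case (prod p q)
    have p: "p \<in> carrier R" by (rule ip_carr[OF I prod(1)])
    have q: "q \<in> carrier R" by (rule ideal.Icarr[OF I prod(2)])
    have eq: "a \<otimes> (p \<otimes> q) = (a \<otimes> p) \<otimes> q" using a p q m_assoc by simp
    show ?case unfolding eq
      by (rule ideal_prod.prod[OF Suc.hyps[OF prod(1)] prod(2)])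
  next
    case (sum s1 s2)
    have "s1 \<in> carrier R" "s2 \<in> carrier R"
      using sum(1,3) ideal_prod_in_carrier[OF ip_ideal[OF I] I] by auto
    then have eq: "a \<otimes> (s1 \<oplus> s2) = a \<otimes> s1 \<oplus> a \<otimes> s2" using a r_distr by simp
    show ?case unfolding eq by (rule ideal_prod.sum[OF sum(2) sum(4)])
  qed
  then show ?case unfolding add_Suc_right ipSuc .
qed


lemma (in ring) ip1_sub: "ideal I R \<Longrightarrow> ideal_pow R I 1 \<subseteq> I"
  using ideal_prod_inter[OF oneideal] by (simp add: ipSuc ip0)

lemma (in ring) coset_in_ideal:
  assumes "ideal J R" "J +> b = J" "b \<in> carrier R"
  shows "b \<in> J"
proof -
  have "\<zero> \<oplus> b \<in> J +> b" using ideal_zero_in[OF assms(1)] unfolding a_r_coset_def' by blast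
  then show ?thesis using assms by simp
qed

lemma (in cring) main_aux:
  assumes I: "ideal I R"
    and rne: "ideal_pow R I r \<noteq> {\<zero>}"
    and r0: "ideal_pow R I (Suc r) = {\<zero>}"
    and Gc: "cring (assoc_graded R I)"
    and Gn: "noetherian_ring (assoc_graded R I)"
    and Mm: "maximalideal M (assoc_graded R I)"
    and pm: "\<And>Pr. primeideal Pr (assoc_graded R I) \<Longrightarrow> Pr = M"
    and sne: "socle (assoc_graded R I) M \<noteq> {\<zero>\<^bsub>assoc_graded R I\<^esub>}"
    and ssimp: "\<And>J. ideal J (assoc_graded R I) \<Longrightarrow> J \<subseteq> socle (assoc_graded R I) M \<Longrightarrow>
                   J = {\<zero>\<^bsub>assoc_graded R I\<^esub>} \<or> J = socle (assoc_graded R I) M"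
    and ir: "i \<le> r" and a: "a \<in> carrier R"
    and H: "\<And>x. x \<in> ideal_pow R I i \<Longrightarrow> a \<otimes> x \<in> ideal_pow R I (Suc i)"
  shows "a \<in> I"
proof (rule ccontr)
  assume aI: "a \<notin> I"
  define G where "G = assoc_graded R I"
  define P where "P = ideal_pow R I"
  interpret G: cring G using Gc unfolding G_def .
  have Pid: "\<And>n. ideal (P n) R" unfolding P_def by (rule ip_ideal[OF I])
  have P0: "\<And>n. \<zero> \<in> P n" using ideal_zero_in[OF Pid] .
  have Pc: "\<And>n x. x \<in> P n \<Longrightarrow> x \<in> carrier R" unfolding P_def by (rule ip_carr[OF I])
  have Pmult: "\<And>x y k l. x \<in> P k \<Longrightarrow> y \<in> P l \<Longrightarrow> x \<otimes> y \<in> P (k + l)"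
    unfolding P_def by (rule ip_mult[OF I])
  have Phigh: "\<And>n. r < n \<Longrightarrow> P n = {\<zero>}"
  proof -
    fix n assume "r < n"
    then have "P n \<subseteq> P (Suc r)" unfolding P_def by (intro ip_mono[OF _ I]) simp
    then show "P n = {\<zero>}" using r0 P0[of n] unfolding P_def by blast
  qed
  have cosz: "\<And>n s. s \<in> P n \<Longrightarrow> P n +> s = P n" using a_rcos_zero[OF Pid] .
  have Gcar: "\<And>f. f \<in> carrier G \<longleftrightarrow> (\<forall>n. \<exists>b \<in> P n. f n = P (Suc n) +> b) \<and> finite {n. f n \<noteq> P (Suc n)}"
    unfolding G_def P_def by (rule ag_carrier)
  have Gmult: "\<And>f g. f \<otimes>\<^bsub>G\<^esub> g = (\<lambda>n. P (Suc n) +> (\<Oplus>k\<in>{..n}. rep (f k) \<otimes> rep (g (n - k))))"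
    unfolding G_def P_def by (rule ag_mult)
  have Gzero: "\<zero>\<^bsub>G\<^esub> = (\<lambda>n. P (Suc n))" unfolding G_def P_def by (rule ag_zero)
  have repm: "\<And>f n. f \<in> carrier G \<Longrightarrow> rep (f n) \<in> P n"
    unfolding G_def P_def by (rule rep_mem[OF I])
  have aPr: "\<And>x. x \<in> P r \<Longrightarrow> a \<otimes> x \<in> P (Suc r)"
  proof -
    fix x assume "x \<in> P r"
    then have "x \<in> ideal_pow R I (i + (r - i))" using ir unfolding P_def by simp
    moreover have "\<forall>x\<in>ideal_pow R I i. a \<otimes> x \<in> ideal_pow R I (Suc i)" using H by (intro ballI)
    ultimately have "a \<otimes> x \<in> ideal_pow R I (Suc (i + (r - i)))" using derived[OF I a] by blast
    then show "a \<otimes> x \<in> P (Suc r)" using ir unfolding P_def by simp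
  qed
  have inG: "f \<in> carrier G" if "\<And>n. f n = P (Suc n) +> b n" "\<And>n. b n \<in> P n" "finite {n. b n \<noteq> \<zero>}" for f b
  proof -
    have "{n. f n \<noteq> P (Suc n)} \<subseteq> {n. b n \<noteq> \<zero>}"
    proof
      fix n assume "n \<in> {n. f n \<noteq> P (Suc n)}"
      then show "n \<in> {n. b n \<noteq> \<zero>}" using that(1)[of n] cosz[OF P0[of "Suc n"]] by auto
    qed
    then have "finite {n. f n \<noteq> P (Suc n)}" using that(3) finite_subset by blast
    then show ?thesis unfolding Gcar using that(1,2) by blast
  qed
  define abar where "abar = (\<lambda>n. P (Suc n) +> (if n = 0 then a else \<zero>))"
  have abarG: "abar \<in> carrier G"
  proof (rule inG[of abar "\<lambda>n. if n = 0 then a else \<zero>"])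
    show "abar n = P (Suc n) +> (if n = 0 then a else \<zero>)" for n unfolding abar_def ..
    show "(if n = 0 then a else \<zero>) \<in> P n" for n using a P0 unfolding P_def by (simp add: ip0)
    show "finite {n. (if n = 0 then a else \<zero>) \<noteq> \<zero>}"
      by (rule finite_subset[of _ "{0}"]) auto
  qed
  have abarnz: "abar \<noteq> \<zero>\<^bsub>G\<^esub>"
  proof
    assume "abar = \<zero>\<^bsub>G\<^esub>"
    then have "P 1 +> a = P 1" using fun_cong[of abar _ 0] unfolding abar_def Gzero by simp
    then have "a \<in> P 1" by (rule coset_in_ideal[OF Pid _ a])
    then show False using aI ip1_sub[OF I] unfolding P_def by blast
  qed
  have key1: "(abar \<otimes>\<^bsub>G\<^esub> w) r = P (Suc r)" if w: "w \<in> carrier G" for w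
  proof -
    have "(\<Oplus>k\<in>{..r}. rep (abar k) \<otimes> rep (w (r - k))) \<in> P (Suc r)"
    proof (rule finsum_ideal[OF Pid finite_atMost])
      fix k assume k: "k \<in> {..r}"
      have z: "rep (w (r - k)) \<in> P (r - k)" by (rule repm[OF w])
      show "rep (abar k) \<otimes> rep (w (r - k)) \<in> P (Suc r)"
      proof (cases "k = 0")
        case True
        obtain h where h: "h \<in> P 1" "rep (abar 0) = h \<oplus> a"
          using rep_coset[OF Pid a, of 1] unfolding abar_def by auto
        have zr: "rep (w r) \<in> P r" by (rule repm[OF w])
        have hc: "h \<in> carrier R" by (rule Pc[OF h(1)])
        have zc: "rep (w r) \<in> carrier R" by (rule Pc[OF zr])
        have eq: "(h \<oplus> a) \<otimes> rep (w r) = h \<otimes> rep (w r) \<oplus> a \<otimes> rep (w r)"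
          using hc a zc by (simp add: l_distr)
        have t1: "h \<otimes> rep (w r) \<in> P (Suc r)" using Pmult[OF h(1) zr] by simp
        have t2: "a \<otimes> rep (w r) \<in> P (Suc r)" by (rule aPr[OF zr])
        have "(h \<oplus> a) \<otimes> rep (w r) \<in> P (Suc r)" unfolding eq
          by (rule additive_subgroup.a_closed[OF ideal.axioms(1)[OF Pid] t1 t2])
        then show ?thesis using True h(2) by simp
      next
        case False
        have "abar k = P (Suc k)" unfolding abar_def using False cosz[OF P0] by simp
        then have rk: "rep (abar k) \<in> P (Suc k)" using rep_ideal[OF Pid] by simp
        have "Suc k + (r - k) = Suc r" using k by auto
        then show ?thesis using Pmult[OF rk z] by simp
      qed
    qed
    then show ?thesis unfolding Gmult using cosz by simp
  qed
  have key2: "(g \<otimes>\<^bsub>G\<^esub> w) n = P (Suc n)"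
    if g: "\<And>n. n < r \<Longrightarrow> g n = P (Suc n)" and w: "w \<in> carrier G" and n: "n < r" for g w n
  proof -
    have "(\<Oplus>k\<in>{..n}. rep (g k) \<otimes> rep (w (n - k))) \<in> P (Suc n)"
    proof (rule finsum_ideal[OF Pid finite_atMost])
      fix k assume k: "k \<in> {..n}"
      have z: "rep (w (n - k)) \<in> P (n - k)" by (rule repm[OF w])
      have "g k = P (Suc k)" using g k n by simp
      then have rk: "rep (g k) \<in> P (Suc k)" using rep_ideal[OF Pid] by simp
      have "Suc k + (n - k) = Suc n" using k by auto
      then show "rep (g k) \<otimes> rep (w (n - k)) \<in> P (Suc n)" using Pmult[OF rk z] by simp
    qed
    then show ?thesis unfolding Gmult using cosz by simp
  qed
  have key3: "f n = P (Suc n)" if f: "f \<in> carrier G" and n: "r < n" for f n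
  proof -
    obtain b where b: "b \<in> P n" "f n = P (Suc n) +> b" using f unfolding Gcar by blast
    have "b = \<zero>" using b(1) Phigh[OF n] by simp
    then show ?thesis using b(2) cosz[OF P0] by simp
  qed
  obtain c where c: "c \<in> P r" "c \<noteq> \<zero>" using rne P0[of r] unfolding P_def by blast
  define u where "u = (\<lambda>n. P (Suc n) +> (if n = r then c else \<zero>))"
  have uG: "u \<in> carrier G"
  proof (rule inG[of u "\<lambda>n. if n = r then c else \<zero>"])
    show "u n = P (Suc n) +> (if n = r then c else \<zero>)" for n unfolding u_def ..
    show "(if n = r then c else \<zero>) \<in> P n" for n using c P0 by simp
    show "finite {n. (if n = r then c else \<zero>) \<noteq> \<zero>}"
      by (rule finite_subset[of _ "{r}"]) auto
  qed
  have unz: "u \<noteq> \<zero>\<^bsub>G\<^esub>"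
  proof
    assume "u = \<zero>\<^bsub>G\<^esub>"
    then have "P (Suc r) +> c = P (Suc r)" using fun_cong[of u _ r] unfolding u_def Gzero by simp
    then have "c \<in> P (Suc r)" by (rule coset_in_ideal[OF Pid _ Pc[OF c(1)]])
    then show False using c(2) r0 unfolding P_def by simp
  qed
  have uconc: "\<And>n. n < r \<Longrightarrow> u n = P (Suc n)" unfolding u_def using cosz[OF P0] by simp
  have Mc: "M \<subseteq> carrier G" using ideal.Icarr[OF maximalideal.axioms(1)[OF Mm[folded G_def]]] by blast
  have nil: "\<And>g. g \<in> M \<Longrightarrow> \<exists>n::nat. g [^]\<^bsub>G\<^esub> n = \<zero>\<^bsub>G\<^esub>"
  proof -
    fix g assume gM: "g \<in> M"
    have pmG: "\<And>Pr. primeideal Pr G \<Longrightarrow> Pr = M" unfolding G_def by (rule pm)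
    have gc: "g \<in> carrier G" using gM Mc by blast
    show "\<exists>n::nat. g [^]\<^bsub>G\<^esub> n = \<zero>\<^bsub>G\<^esub>"
      by (rule G.nilpotent_of_unique_prime[OF pmG gM gc])
  qed
  have soc: "\<exists>y\<in>carrier G. x \<otimes>\<^bsub>G\<^esub> y \<noteq> \<zero>\<^bsub>G\<^esub> \<and> (\<forall>g\<in>M. (x \<otimes>\<^bsub>G\<^esub> y) \<otimes>\<^bsub>G\<^esub> g = \<zero>\<^bsub>G\<^esub>)"
    if "x \<in> carrier G" "x \<noteq> \<zero>\<^bsub>G\<^esub>" for x
    by (rule G.socle_multiple[OF Gn[folded G_def] nil Mc that])
  obtain y where y: "y \<in> carrier G" "abar \<otimes>\<^bsub>G\<^esub> y \<noteq> \<zero>\<^bsub>G\<^esub>"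
      "\<forall>g\<in>M. (abar \<otimes>\<^bsub>G\<^esub> y) \<otimes>\<^bsub>G\<^esub> g = \<zero>\<^bsub>G\<^esub>"
    using soc[OF abarG abarnz] by blast
  obtain y' where y': "y' \<in> carrier G" "u \<otimes>\<^bsub>G\<^esub> y' \<noteq> \<zero>\<^bsub>G\<^esub>"
      "\<forall>g\<in>M. (u \<otimes>\<^bsub>G\<^esub> y') \<otimes>\<^bsub>G\<^esub> g = \<zero>\<^bsub>G\<^esub>"
    using soc[OF uG unz] by blast
  define s where "s = abar \<otimes>\<^bsub>G\<^esub> y"
  define t where "t = u \<otimes>\<^bsub>G\<^esub> y'"
  have sc: "s \<in> carrier G" unfolding s_def using abarG y(1) by simp
  have tc: "t \<in> carrier G" unfolding t_def using uG y'(1) by simp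
  have PS: "PIdl\<^bsub>G\<^esub> s \<subseteq> socle G M"
  proof
    fix e assume "e \<in> PIdl\<^bsub>G\<^esub> s"
    then obtain x where x: "x \<in> carrier G" "e = x \<otimes>\<^bsub>G\<^esub> s" unfolding cgenideal_def by blast
    have "(x \<otimes>\<^bsub>G\<^esub> s) \<otimes>\<^bsub>G\<^esub> g = \<zero>\<^bsub>G\<^esub>" if g: "g \<in> M" for g
    proof -
      have gc: "g \<in> carrier G" using g Mc by blast
      have "(x \<otimes>\<^bsub>G\<^esub> s) \<otimes>\<^bsub>G\<^esub> g = x \<otimes>\<^bsub>G\<^esub> (s \<otimes>\<^bsub>G\<^esub> g)"
        using x(1) sc gc by (simp add: G.m_assoc)
      also have "\<dots> = \<zero>\<^bsub>G\<^esub>" using y(3) g x(1) unfolding s_def by simp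
      finally show ?thesis .
    qed
    then show "e \<in> socle G M" unfolding socle_def using x sc by simp
  qed
  have "PIdl\<^bsub>G\<^esub> s \<noteq> {\<zero>\<^bsub>G\<^esub>}" using G.cgenideal_self[OF sc] y(2) unfolding s_def by blast
  then have PSe: "PIdl\<^bsub>G\<^esub> s = socle G M"
    using ssimp[folded G_def, OF G.cgenideal_ideal[OF sc] PS] by blast
  have "t \<in> socle G M" unfolding socle_def using tc y'(3) unfolding t_def by simp
  then obtain h where h: "h \<in> carrier G" "t = h \<otimes>\<^bsub>G\<^esub> s" unfolding PSe[symmetric] cgenideal_def by blast
  have teq: "t = abar \<otimes>\<^bsub>G\<^esub> (h \<otimes>\<^bsub>G\<^esub> y)" unfolding h(2) s_def using h(1) abarG y(1)
    by (simp add: G.m_lcomm)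
  have "t = \<zero>\<^bsub>G\<^esub>"
  proof
    fix n
    show "t n = \<zero>\<^bsub>G\<^esub> n"
    proof (cases n r rule: linorder_cases)
      case less
      then show ?thesis unfolding Gzero t_def using key2[OF uconc y'(1) less] by simp
    next
      case equal
      have "h \<otimes>\<^bsub>G\<^esub> y \<in> carrier G" using h(1) y(1) by simp
      then show ?thesis unfolding Gzero teq equal using key1 by simp
    next
      case greater
      then show ?thesis unfolding Gzero using key3[OF tc] by simp
    qed
  qed
  then show False using y'(2) unfolding t_def by simp
qed


theorem corollary3p4:
  fixes R :: "('a, 'b) ring_scheme" and I m :: "'a set" and r :: nat
  assumes "zero_dim_gorenstein_local R"
    and "maximalideal m R"
    and "ideal I R"
    and "I \<subseteq> m"
    and "ideal_pow R I r \<noteq> {\<zero>\<^bsub>R\<^esub>}"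
    and "ideal_pow R I (Suc r) = {\<zero>\<^bsub>R\<^esub>}"
    and "zero_dim_gorenstein_local (assoc_graded R I)"
  shows "\<forall>i \<le> r. faithful_over_quot R I (ideal_pow R I i) (ideal_pow R I (Suc i))"
proof (intro allI impI)
  fix i assume ir: "i \<le> r"
  have Rc: "cring R" using assms(1) unfolding zero_dim_gorenstein_local_def by blast
  interpret cring R by (rule Rc)
  have G: "cring (assoc_graded R I)" "noetherian_ring (assoc_graded R I)"
    "\<exists>!m. maximalideal m (assoc_graded R I)"
    "\<And>P. primeideal P (assoc_graded R I) \<Longrightarrow> maximalideal P (assoc_graded R I)"
    "\<And>m. maximalideal m (assoc_graded R I) \<Longrightarrow> socle (assoc_graded R I) m \<noteq> {\<zero>\<^bsub>assoc_graded R I\<^esub>} \<and>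
        (\<forall>J. ideal J (assoc_graded R I) \<and> J \<subseteq> socle (assoc_graded R I) m \<longrightarrow>
           J = {\<zero>\<^bsub>assoc_graded R I\<^esub>} \<or> J = socle (assoc_graded R I) m)"
    using assms(7) unfolding zero_dim_gorenstein_local_def by blast+
  obtain M where M: "maximalideal M (assoc_graded R I)" using G(3) by blast
  have pm: "\<And>Pr. primeideal Pr (assoc_graded R I) \<Longrightarrow> Pr = M"
    using G(3) G(4) M by blast
  have S: "socle (assoc_graded R I) M \<noteq> {\<zero>\<^bsub>assoc_graded R I\<^esub>}"
    "\<And>J. ideal J (assoc_graded R I) \<Longrightarrow> J \<subseteq> socle (assoc_graded R I) M \<Longrightarrow>
                   J = {\<zero>\<^bsub>assoc_graded R I\<^esub>} \<or> J = socle (assoc_graded R I) M"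
    using G(5)[OF M] by blast+
  show "faithful_over_quot R I (ideal_pow R I i) (ideal_pow R I (Suc i))"
    unfolding faithful_over_quot_def
  proof
    show "ann_quot R (ideal_pow R I i) (ideal_pow R I (Suc i)) \<subseteq> I"
    proof
      fix a assume "a \<in> ann_quot R (ideal_pow R I i) (ideal_pow R I (Suc i))"
      then have a: "a \<in> carrier R" and H: "\<And>x. x \<in> ideal_pow R I i \<Longrightarrow> a \<otimes>\<^bsub>R\<^esub> x \<in> ideal_pow R I (Suc i)"
        unfolding ann_quot_def by auto
      show "a \<in> I"
        by (rule main_aux[OF assms(3) assms(5) assms(6) G(1) G(2) M pm S(1) S(2) ir a H])
    qed
    show "I \<subseteq> ann_quot R (ideal_pow R I i) (ideal_pow R I (Suc i))"
    proof
      fix a assume aI: "a \<in> I"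
      have ac: "a \<in> carrier R" by (rule ideal.Icarr[OF assms(3) aI])
      have "a \<otimes>\<^bsub>R\<^esub> x \<in> ideal_pow R I (Suc i)" if x: "x \<in> ideal_pow R I i" for x
      proof -
        have xc: "x \<in> carrier R" by (rule ip_carr[OF assms(3) x])
        have "x \<otimes>\<^bsub>R\<^esub> a \<in> ideal_prod R (ideal_pow R I i) I" by (rule ideal_prod.prod[OF x aI])
        then show ?thesis using m_comm[OF ac xc] by (simp add: ipSuc)
      qed
      then show "a \<in> ann_quot R (ideal_pow R I i) (ideal_pow R I (Suc i))"
        unfolding ann_quot_def using ac by blast
    qed
  qed
qed


end
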